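(* Let $(\Omega,\mathcal R,\mathcal K)$ be a bidirectional kinetic system with matrix of reactions having columns $R_1,\dots,R_{|\mathcal R|/2}$ and cycle space $\mathcal C$, and let $\mathcal R_a\subset\mathcal R$. Suppose there is a cycle $c\in\mathcal C$ with $\sum_{j=1}^{|\mathcal R|/2}\log\!\left(\frac{K_{-R_j}}{K_{R_j}}\right)c(j)\neq0$ and such that every $R_j$ with $c(j)\neq0$ (and its reverse) belongs to $\mathcal R_a$. Then $(\Omega,\mathcal R,\mathcal K)$ does not admit an $\mathcal R_a$-admissible closed completion.
   Context: A chemical network is $(\Omega,\mathcal R)$ with $\Omega=\{1,\dots,N\}$ and $\mathcal R$ a finite set of nonzero integer vectors indexed by $\Omega$. $I(R)=\{i:R(i)<0\}$, $F(R)=\{i:R(i)>0\}$. Bidirectional: $R\in\mathcal R\Rightarrow-R\in\mathcal R$; $\mathcal R_s$ contains exactly one of each pair $\{R,-R\}$; the matrix of reactions $\mathbf R$ has the elements $R_1,\dots,R_{|\mathcal R_s|}$ of $\mathcal R_s$ as columns; cycle space $\mathcal C=\ker\mathbf R$. Conservation laws $\mathcal M=(\mathrm{span}\,\mathcal R)^\perp$; conservative: $\mathcal M\cap(0,\infty)^\Omega\ne\emptyset$. Kinetic system: rates $\mathcal K:\mathcal R\to(0,\infty)$, $K_R=\mathcal K(R)$; detailed balance: there is $\bar N\in(0,\infty)^\Omega$ with $K_R\prod_{i\in I(R)}\bar N_i^{-R(i)}=K_{-R}\prod_{i\in F(R)}\bar N_i^{R(i)}$ for all $R\in\mathcal R_s$.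 Closed: detailed balance, conservative, and $I(R),F(R)\neq\emptyset$ for all reactions. $\pi_Av=(v(i))_{i\in A}$. For $(\Omega_c,\mathcal R_c,\mathcal K_c)$ with $\Omega\subset\Omega_c$ and positive $n=(n_i)_{i\in\Omega_c\setminus\Omega}$, reduced rates $\mathcal K_c[n](R)=\sum_{\bar R\in\mathcal R_c:\pi_\Omega\bar R=R}\mathcal K_c(\bar R)\prod_{s\in(\Omega_c\setminus\Omega)\cap I(\bar R)}n_s^{-\bar R(s)}$. A completion of $(\Omega,\mathcal R,\mathcal K)$ is a kinetic system $(\Omega_c,\mathcal R_c,\mathcal K_c)$ with $\Omega\subset\Omega_c$, $\mathcal R=\{\pi_\Omega R:R\in\mathcal R_c\}$, and $\mathcal K=\mathcal K_c[n]$ for some such $n$. It is $\mathcal R_a$-admissible if $\pi_{\Omega_c\setminus\Omega}R=0$ for every $R\in\mathcal R_c$ with $\pi_\Omega R\in\mathcal R_a$ (the reactions in $\mathcal R_a$ are the constrained reactions). *)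

theory Defs
  imports Complex_Main
begin

text \<open>Rates are functions from reactions to reals (only values on the reaction set matter).\<close>

definition species :: "nat \<Rightarrow> nat set" where
  "species N = {1..N}"

definition chem_network :: "nat \<Rightarrow> (nat \<Rightarrow> int) set \<Rightarrow> bool" where
  "chem_network N \<R> \<longleftrightarrow> finite \<R> \<and>
     (\<forall>R\<in>\<R>. R \<noteq> (\<lambda>_. 0) \<and> (\<forall>i. i \<notin> species N \<longrightarrow> R i = 0))"

definition kinetic_system :: "nat \<Rightarrow> (nat \<Rightarrow> int) set \<Rightarrow> ((nat \<Rightarrow> int) \<Rightarrow> real) \<Rightarrow> bool" where
  "kinetic_system N \<R> K \<longleftrightarrow> chem_network N \<R> \<and> (\<forall>R\<in>\<R>. K R > 0)"

definition react_I :: "nat \<Rightarrow> (nat \<Rightarrow> int) \<Rightarrow> nat set" where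
  "react_I N R = {i \<in> species N. R i < 0}"

definition react_F :: "nat \<Rightarrow> (nat \<Rightarrow> int) \<Rightarrow> nat set" where
  "react_F N R = {i \<in> species N. R i > 0}"

definition bidirectional :: "(nat \<Rightarrow> int) set \<Rightarrow> bool" where
  "bidirectional \<R> \<longleftrightarrow> (\<forall>R\<in>\<R>. (\<lambda>i. - R i) \<in> \<R>)"

text \<open>A list Rs enumerating a set \<R>_s containing exactly one element of each pair {R,-R};
  its entries (Rs ! 0, ..., Rs ! (m-1)) are the columns of the matrix of reactions.\<close>
definition reaction_columns :: "(nat \<Rightarrow> int) set \<Rightarrow> (nat \<Rightarrow> int) list \<Rightarrow> bool" where
  "reaction_columns \<R> Rs \<longleftrightarrow> distinct Rs \<and> set Rs \<subseteq> \<R> \<and>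
     (\<forall>R\<in>\<R>. R \<in> set Rs \<or> (\<lambda>i. - R i) \<in> set Rs) \<and>
     (\<forall>R\<in>set Rs. (\<lambda>i. - R i) \<notin> set Rs)"

text \<open>Cycle space: kernel of the matrix of reactions (c j is the coefficient of column Rs ! j).\<close>
definition is_cycle :: "nat \<Rightarrow> (nat \<Rightarrow> int) list \<Rightarrow> (nat \<Rightarrow> real) \<Rightarrow> bool" where
  "is_cycle N Rs c \<longleftrightarrow> (\<forall>i\<in>species N. (\<Sum>j<length Rs. c j * real_of_int ((Rs ! j) i)) = 0)"

definition detailed_balance :: "nat \<Rightarrow> (nat \<Rightarrow> int) set \<Rightarrow> ((nat \<Rightarrow> int) \<Rightarrow> real) \<Rightarrow> bool" where
  "detailed_balance N \<R> K \<longleftrightarrow> (\<exists>Nb :: nat \<Rightarrow> real. (\<forall>i\<in>species N. Nb i > 0) \<and>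
     (\<forall>R\<in>\<R>. K R * (\<Prod>i\<in>react_I N R. Nb i ^ nat (- R i))
              = K (\<lambda>i. - R i) * (\<Prod>i\<in>react_F N R. Nb i ^ nat (R i))))"

definition conservative :: "nat \<Rightarrow> (nat \<Rightarrow> int) set \<Rightarrow> bool" where
  "conservative N \<R> \<longleftrightarrow> (\<exists>m :: nat \<Rightarrow> real. (\<forall>i\<in>species N. m i > 0) \<and>
     (\<forall>R\<in>\<R>. (\<Sum>i\<in>species N. m i * real_of_int (R i)) = 0))"

definition closed_system :: "nat \<Rightarrow> (nat \<Rightarrow> int) set \<Rightarrow> ((nat \<Rightarrow> int) \<Rightarrow> real) \<Rightarrow> bool" where
  "closed_system N \<R> K \<longleftrightarrow> kinetic_system N \<R> K \<and> bidirectional \<R> \<and>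
     detailed_balance N \<R> K \<and> conservative N \<R> \<and>
     (\<forall>R\<in>\<R>. react_I N R \<noteq> {} \<and> react_F N R \<noteq> {})"

definition proj :: "nat set \<Rightarrow> (nat \<Rightarrow> int) \<Rightarrow> (nat \<Rightarrow> int)" where
  "proj A v = (\<lambda>i. if i \<in> A then v i else 0)"

definition reduced_rate :: "nat \<Rightarrow> nat \<Rightarrow> (nat \<Rightarrow> int) set \<Rightarrow> ((nat \<Rightarrow> int) \<Rightarrow> real)
    \<Rightarrow> (nat \<Rightarrow> real) \<Rightarrow> (nat \<Rightarrow> int) \<Rightarrow> real" where
  "reduced_rate N Nc \<R>c Kc n R =
     (\<Sum>Rb\<in>{Rb\<in>\<R>c. proj (species N) Rb = R}.
        Kc Rb * (\<Prod>s\<in>(species Nc - species N) \<inter> react_I Nc Rb. n s ^ nat (- Rb s)))"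

definition completion :: "nat \<Rightarrow> (nat \<Rightarrow> int) set \<Rightarrow> ((nat \<Rightarrow> int) \<Rightarrow> real)
    \<Rightarrow> nat \<Rightarrow> (nat \<Rightarrow> int) set \<Rightarrow> ((nat \<Rightarrow> int) \<Rightarrow> real) \<Rightarrow> bool" where
  "completion N \<R> K Nc \<R>c Kc \<longleftrightarrow> species N \<subseteq> species Nc \<and> kinetic_system Nc \<R>c Kc \<and>
     \<R> = proj (species N) ` \<R>c \<and>
     (\<exists>n :: nat \<Rightarrow> real. (\<forall>s\<in>species Nc - species N. n s > 0) \<and>
        (\<forall>R\<in>\<R>. K R = reduced_rate N Nc \<R>c Kc n R))"

definition admissible :: "nat \<Rightarrow> (nat \<Rightarrow> int) set \<Rightarrow> nat \<Rightarrow> (nat \<Rightarrow> int) set \<Rightarrow> bool" where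
  "admissible N \<R>a Nc \<R>c \<longleftrightarrow>
     (\<forall>Rb\<in>\<R>c. proj (species N) Rb \<in> \<R>a \<longrightarrow> (\<forall>s\<in>species Nc - species N. Rb s = 0))"

end

theory Submission
  imports Defs
begin

lemma log_db:
  fixes R :: "nat \<Rightarrow> int" and Nb :: "nat \<Rightarrow> real"
  assumes pos: "\<forall>i\<in>species Nc. Nb i > 0" and a: "(a::real) > 0" and b: "(b::real) > 0"
    and eq: "a * (\<Prod>i\<in>react_I Nc R. Nb i ^ nat (- R i)) = b * (\<Prod>i\<in>react_F Nc R. Nb i ^ nat (R i))"
  shows "ln (b / a) = - (\<Sum>i\<in>species Nc. real_of_int (R i) * ln (Nb i))"
proof -
  have fin: "finite (species Nc)" by (simp add: species_def)
  have IS: "react_I Nc R \<subseteq> species Nc" "react_F Nc R \<subseteq> species Nc"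
    by (auto simp: react_I_def react_F_def)
  have finI: "finite (react_I Nc R)" "finite (react_F Nc R)"
    using IS fin finite_subset by blast+
  let ?P = "\<Prod>i\<in>react_I Nc R. Nb i ^ nat (- R i)"
  let ?Q = "\<Prod>i\<in>react_F Nc R. Nb i ^ nat (R i)"
  have Pp: "?P > 0" using IS pos by (intro prod_pos) auto
  have Qp: "?Q > 0" using IS pos by (intro prod_pos) auto
  have "b / a = ?P / ?Q" using eq a b Pp Qp by (simp add: field_simps)
  hence "ln (b / a) = ln ?P - ln ?Q" using Pp Qp by (simp add: ln_div)
  also have "ln ?P = (\<Sum>i\<in>react_I Nc R. ln (Nb i ^ nat (- R i)))"
    using IS pos finI by (intro ln_prod) (auto, fastforce)
  also have "\<dots> = (\<Sum>i\<in>react_I Nc R. - real_of_int (R i) * ln (Nb i))"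
  proof (rule sum.cong[OF refl])
    fix i assume i: "i \<in> react_I Nc R"
    hence "Nb i > 0" "R i < 0" using IS pos by (auto simp: react_I_def)
    thus "ln (Nb i ^ nat (- R i)) = - real_of_int (R i) * ln (Nb i)"
      by (simp add: ln_realpow)
  qed
  also have "ln ?Q = (\<Sum>i\<in>react_F Nc R. ln (Nb i ^ nat (R i)))"
    using IS pos finI by (intro ln_prod) (auto, fastforce)
  also have "\<dots> = (\<Sum>i\<in>react_F Nc R. real_of_int (R i) * ln (Nb i))"
  proof (rule sum.cong[OF refl])
    fix i assume i: "i \<in> react_F Nc R"
    hence "Nb i > 0" "R i > 0" using IS pos by (auto simp: react_F_def)
    thus "ln (Nb i ^ nat (R i)) = real_of_int (R i) * ln (Nb i)"
      by (simp add: ln_realpow)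
  qed
  also have "(\<Sum>i\<in>react_I Nc R. - real_of_int (R i) * ln (Nb i))
     = (\<Sum>i\<in>species Nc. if R i < 0 then - real_of_int (R i) * ln (Nb i) else 0)"
    unfolding react_I_def using fin by (rule sum.inter_filter)
  also have "(\<Sum>i\<in>react_F Nc R. real_of_int (R i) * ln (Nb i))
     = (\<Sum>i\<in>species Nc. if R i > 0 then real_of_int (R i) * ln (Nb i) else 0)"
    unfolding react_F_def using fin by (rule sum.inter_filter)
  also have "(\<Sum>i\<in>species Nc. if R i < 0 then - real_of_int (R i) * ln (Nb i) else 0)
     - (\<Sum>i\<in>species Nc. if R i > 0 then real_of_int (R i) * ln (Nb i) else 0)
     = (\<Sum>i\<in>species Nc. (if R i < 0 then - real_of_int (R i) * ln (Nb i) else 0)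
          - (if R i > 0 then real_of_int (R i) * ln (Nb i) else 0))"
    by (simp add: sum_subtractf)
  also have "\<dots> = (\<Sum>i\<in>species Nc. - (real_of_int (R i) * ln (Nb i)))"
    by (rule sum.cong) auto
  finally show ?thesis by (simp add: sum_negf)
qed

theorem proposition6p8:
  fixes N :: nat and \<R> \<R>a :: "(nat \<Rightarrow> int) set" and K :: "(nat \<Rightarrow> int) \<Rightarrow> real"
    and Rs :: "(nat \<Rightarrow> int) list" and c :: "nat \<Rightarrow> real"
  assumes "kinetic_system N \<R> K"
    and "bidirectional \<R>"
    and "reaction_columns \<R> Rs"
    and "\<R>a \<subseteq> \<R>"
    and "is_cycle N Rs c"
    and "(\<Sum>j<length Rs. ln (K (\<lambda>i. - (Rs ! j) i) / K (Rs ! j)) * c j) \<noteq> 0"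
    and "\<forall>j<length Rs. c j \<noteq> 0 \<longrightarrow> Rs ! j \<in> \<R>a \<and> (\<lambda>i. - (Rs ! j) i) \<in> \<R>a"
  shows "\<not> (\<exists>Nc \<R>c Kc. completion N \<R> K Nc \<R>c Kc \<and> admissible N \<R>a Nc \<R>c
                        \<and> closed_system Nc \<R>c Kc)"
proof
  assume "\<exists>Nc \<R>c Kc. completion N \<R> K Nc \<R>c Kc \<and> admissible N \<R>a Nc \<R>c
                        \<and> closed_system Nc \<R>c Kc"
  then obtain Nc \<R>c Kc where comp: "completion N \<R> K Nc \<R>c Kc" and adm: "admissible N \<R>a Nc \<R>c"
    and cl: "closed_system Nc \<R>c Kc" by blast
  have sub: "species N \<subseteq> species Nc" and kc: "kinetic_system Nc \<R>c Kc"
    and Rimg: "\<R> = proj (species N) ` \<R>c" using comp by (auto simp: completion_def)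
  obtain n where rr: "\<forall>R\<in>\<R>. K R = reduced_rate N Nc \<R>c Kc n R"
    using comp unfolding completion_def by blast
  obtain Nb where Nbp: "\<forall>i\<in>species Nc. Nb i > 0" and db: "\<forall>R\<in>\<R>c. Kc R * (\<Prod>i\<in>react_I Nc R. Nb i ^ nat (- R i))
              = Kc (\<lambda>i. - R i) * (\<Prod>i\<in>react_F Nc R. Nb i ^ nat (R i))"
    using cl by (auto simp: closed_system_def detailed_balance_def)
  have bic: "bidirectional \<R>c" using cl by (simp add: closed_system_def)
  have Kcp: "\<forall>R\<in>\<R>c. Kc R > 0" and suppc: "\<forall>R\<in>\<R>c. \<forall>i. i \<notin> species Nc \<longrightarrow> R i = 0"
    using kc by (auto simp: kinetic_system_def chem_network_def)
  have suppR: "\<forall>R\<in>\<R>. \<forall>i. i \<notin> species N \<longrightarrow> R i = 0"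
    using assms(1) by (auto simp: kinetic_system_def chem_network_def)
  have key: "R \<in> \<R>c \<and> K R = Kc R" if R: "R \<in> \<R>a" for R
  proof -
    have RR: "R \<in> \<R>" using R assms(4) by blast
    have eqset: "{Rb\<in>\<R>c. proj (species N) Rb = R} = {R}"
    proof -
      have 1: "Rb = R" if "Rb \<in> \<R>c" "proj (species N) Rb = R" for Rb
      proof
        fix i
        have z: "\<forall>s\<in>species Nc - species N. Rb s = 0" using adm that R
          by (auto simp: admissible_def)
        show "Rb i = R i"
          using z suppc that(1) that(2)[symmetric] by (auto simp: proj_def)
      qed
      obtain Rb where h: "Rb \<in> \<R>c" "proj (species N) Rb = R" using RR Rimg by blast
      have "Rb = R" using 1[OF h] .
      with h 1 show ?thesis by auto
    qed
    have "R \<in> \<R>c" using eqset by blast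
    moreover have "(species Nc - species N) \<inter> react_I Nc R = {}"
      using suppR RR by (auto simp: react_I_def)
    ultimately show ?thesis using rr RR eqset by (simp add: reduced_rate_def)
  qed
  define L where "L i = ln (Nb i)" for i
  have trm: "ln (K (\<lambda>i. - (Rs ! j) i) / K (Rs ! j)) * c j
      = - (\<Sum>i\<in>species N. real_of_int ((Rs ! j) i) * L i) * c j" if j: "j < length Rs" for j
  proof (cases "c j = 0")
    case False
    let ?R = "Rs ! j"
    have a: "?R \<in> \<R>a" "(\<lambda>i. - ?R i) \<in> \<R>a" using assms(7) j False by auto
    have k1: "?R \<in> \<R>c" "K ?R = Kc ?R" using key[OF a(1)] by auto
    have k2: "(\<lambda>i. - ?R i) \<in> \<R>c" "K (\<lambda>i. - ?R i) = Kc (\<lambda>i. - ?R i)" using key[OF a(2)] by auto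
    have "ln (Kc (\<lambda>i. - ?R i) / Kc ?R) = - (\<Sum>i\<in>species Nc. real_of_int (?R i) * ln (Nb i))"
      by (rule log_db[OF Nbp]) (use k1 k2 Kcp db in auto)
    also have "(\<Sum>i\<in>species Nc. real_of_int (?R i) * ln (Nb i))
       = (\<Sum>i\<in>species N. real_of_int (?R i) * ln (Nb i))"
    proof (rule sum.mono_neutral_right)
      show "finite (species Nc)" by (simp add: species_def)
      show "species N \<subseteq> species Nc" by (rule sub)
      have "?R \<in> \<R>" using a assms(4) by blast
      thus "\<forall>i\<in>species Nc - species N. real_of_int (?R i) * ln (Nb i) = 0"
        using suppR by auto
    qed
    finally show ?thesis using k1 k2 by (simp add: L_def)
  qed simp
  have "(\<Sum>j<length Rs. ln (K (\<lambda>i. - (Rs ! j) i) / K (Rs ! j)) * c j)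
      = (\<Sum>j<length Rs. - (\<Sum>i\<in>species N. real_of_int ((Rs ! j) i) * L i) * c j)"
    using trm by simp
  also have "\<dots> = - (\<Sum>j<length Rs. \<Sum>i\<in>species N. c j * real_of_int ((Rs ! j) i) * L i)"
    by (simp add: sum_negf sum_distrib_right sum_distrib_left mult_ac)
  also have "\<dots> = - (\<Sum>i\<in>species N. \<Sum>j<length Rs. c j * real_of_int ((Rs ! j) i) * L i)"
    by (subst sum.swap) simp
  also have "\<dots> = - (\<Sum>i\<in>species N. (\<Sum>j<length Rs. c j * real_of_int ((Rs ! j) i)) * L i)"
    by (simp add: sum_distrib_right)
  also have "\<dots> = 0" using assms(5) by (simp add: is_cycle_def)
  finally show False using assms(6) by simp
qed

end
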